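(* Let $K>0$, $K\neq 1$, and let \[ A_6=\begin{pmatrix} K & K & 1\\ K & 1 & 1\\ 1 & 1 & 1\end{pmatrix}. \] Then $S(A_6)=XA_6X$ with $X=\operatorname{diag}(x,y,z)$, \[ y=\frac{1}{\sqrt{1+K^{1/3}+K^{2/3}}},\quad x=\frac{y}{K^{1/3}},\quad z=K^{1/3}y, \] and $S(A_6)$ is the circulant-type matrix \[ S(A_6)=\begin{pmatrix} a & b & c\\ b & c & a\\ c & a & b\end{pmatrix},\qquad a=\frac{K^{2/3}-K^{1/3}}{K-1},\quad b=\frac{K-K^{2/3}}{K-1},\quad c=\frac{K^{1/3}-1}{K-1}. \] Consequently, if $A_6^{(\ell)}=(a^{(\ell)}_{i,j})$ denotes the $\ell$th matrix of the alternate minimization sequence starting from $A_6$, then $\lim_{\ell\to\infty}\bigl((K-1)a^{(\ell)}_{1,3}+1\bigr)=K^{1/3}$, and similarly with $a^{(\ell)}_{2,2}$ or $a^{(\ell)}_{3,1}$ in place of $a^{(\ell)}_{1,3}$; for rational $K$ this gives sequences of rational numbers converging to $K^{1/3}$. Also $\lim_{K\to\infty}S(A_6)=\begin{pmatrix} 0&1&0\\1&0&0\\0&0&1\end{pmatrix}$.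
   Context: For a positive $n\times n$ matrix $A$, the Sinkhorn limit $S(A)$ is the unique doubly stochastic matrix of the form $XAY$ with $X,Y$ positive diagonal matrices; it is the limit of the alternate minimization sequence obtained from $A$ by alternately row scaling (dividing each row by its row sum) and column scaling (dividing each column by its column sum). For a positive symmetric matrix $A$ there is a unique positive diagonal $X$ with $S(A)=XAX$. *)

theory Defs
  imports "HOL-Analysis.Analysis"
begin

text \<open>n x n real matrices are represented as functions nat => nat => real,
  with 0-based indices i, j < n (entry (i+1, j+1) of the paper is M i j).\<close>

definition positive_matrix :: "nat \<Rightarrow> (nat \<Rightarrow> nat \<Rightarrow> real) \<Rightarrow> bool" where
  "positive_matrix n A \<longleftrightarrow> (\<forall>i<n. \<forall>j<n. A i j > 0)"

definition doubly_stochastic :: "nat \<Rightarrow> (nat \<Rightarrow> nat \<Rightarrow> real) \<Rightarrow> bool" where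
  "doubly_stochastic n M \<longleftrightarrow>
     (\<forall>i<n. \<forall>j<n. M i j \<ge> 0) \<and>
     (\<forall>i<n. (\<Sum>j<n. M i j) = 1) \<and>
     (\<forall>j<n. (\<Sum>i<n. M i j) = 1)"

text \<open>Entries outside the index range
  are normalised to 0 so that the matrix is uniquely determined.\<close>
definition sinkhorn :: "nat \<Rightarrow> (nat \<Rightarrow> nat \<Rightarrow> real) \<Rightarrow> (nat \<Rightarrow> nat \<Rightarrow> real)" where
  "sinkhorn n A = (THE M. doubly_stochastic n M \<and>
      (\<forall>i j. (n \<le> i \<or> n \<le> j) \<longrightarrow> M i j = 0) \<and>
      (\<exists>x y. (\<forall>i<n. x i > 0 \<and> y i > 0) \<and>
             (\<forall>i<n. \<forall>j<n. M i j = x i * A i j * y j)))"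

definition row_scale :: "nat \<Rightarrow> (nat \<Rightarrow> nat \<Rightarrow> real) \<Rightarrow> (nat \<Rightarrow> nat \<Rightarrow> real)" where
  "row_scale n M = (\<lambda>i j. M i j / (\<Sum>k<n. M i k))"

definition col_scale :: "nat \<Rightarrow> (nat \<Rightarrow> nat \<Rightarrow> real) \<Rightarrow> (nat \<Rightarrow> nat \<Rightarrow> real)" where
  "col_scale n M = (\<lambda>i j. M i j / (\<Sum>k<n. M k j))"

fun alt_min :: "nat \<Rightarrow> (nat \<Rightarrow> nat \<Rightarrow> real) \<Rightarrow> nat \<Rightarrow> (nat \<Rightarrow> nat \<Rightarrow> real)" where
  "alt_min n A 0 = A"
| "alt_min n A (Suc l) =
     (if even l then row_scale n (alt_min n A l) else col_scale n (alt_min n A l))"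

definition A6 :: "real \<Rightarrow> nat \<Rightarrow> nat \<Rightarrow> real" where
  "A6 K i j = (if i < 3 \<and> j < 3 then [[K, K, 1], [K, 1, 1], [1, 1, 1]] ! i ! j else 0)"

end

theory Submission
  imports Defs "HOL-Real_Asymp.Real_Asymp"
begin

locale sk =
  fixes n :: nat and A :: "nat \<Rightarrow> nat \<Rightarrow> real" and x :: "nat \<Rightarrow> real" and th :: real
  assumes n_pos: "0 < n"
  and symA: "\<And>i j. A i j = A j i"
  and Apos: "\<And>i j. i<n \<Longrightarrow> j<n \<Longrightarrow> A i j > 0"
  and th_pos: "0 < th" and th_le: "th \<le> 1"
  and th_A: "\<And>i j k. i<n \<Longrightarrow> j<n \<Longrightarrow> k<n \<Longrightarrow> th * A j k \<le> A i k"
  and xpos: "\<And>i. i<n \<Longrightarrow> x i > 0"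
  and xfix: "\<And>i. i<n \<Longrightarrow> x i * (\<Sum>k<n. A i k * x k) = 1"
begin

definition Av where "Av v i = (\<Sum>k<n. A i k * v k)"
definition T where "T v = (\<lambda>i. 1 / Av v i)"
definition kap where "kap = (1 - th^2)/(1 + th^2)"

lemma kap_nonneg: "0 \<le> kap" and kap_less: "kap < 1"
proof -
  have "th^2 \<le> 1" using th_pos th_le by (simp add: power_le_one)
  then show "0 \<le> kap" unfolding kap_def by (simp add: divide_nonneg_pos)
  have "0 < th^2" using th_pos by simp
  then have "1 - th^2 < 1 + th^2" "0 < 1 + th^2" by linarith+
  then show "kap < 1" unfolding kap_def by (simp add: divide_less_eq)
qed

lemma Av_x: "i<n \<Longrightarrow> Av x i = 1 / x i"
proof -
  assume i: "i<n"
  have "x i * Av x i = 1" using xfix[OF i] by (simp add: Av_def)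
  then show ?thesis using xpos[OF i] by (simp add: field_simps)
qed

lemma Av_lin: "Av (\<lambda>k. a * v k + b * w k) i = a * Av v i + b * Av w i"
  unfolding Av_def by (simp add: algebra_simps sum.distrib sum_distrib_left)

lemma Av_ratio:
  assumes "\<forall>k<n. u k \<ge> 0" "i<n" "j<n"
  shows "th * Av u j \<le> Av u i"
  unfolding Av_def sum_distrib_left
proof (rule sum_mono)
  fix k assume k: "k \<in> {..<n}"
  have "th * A j k * u k \<le> A i k * u k"
    using th_A[of i j k] assms k by (intro mult_right_mono) auto
  then show "th * (A j k * u k) \<le> A i k * u k" by (simp add: mult.assoc)
qed

lemma Av_mono:
  assumes "\<forall>k<n. u k \<le> w k" "i<n"
  shows "Av u i \<le> Av w i"
  unfolding Av_def
  by (rule sum_mono) (use assms Apos in \<open>auto intro: mult_left_mono less_imp_le\<close>)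

lemma x_ratio: "i<n \<Longrightarrow> j<n \<Longrightarrow> th * x j \<le> x i"
proof -
  assume i: "i<n" and j: "j<n"
  have "th * Av x i \<le> Av x j" using Av_ratio[of x j i] xpos i j by (auto intro: less_imp_le)
  then have "th / x i \<le> 1 / x j" using Av_x i j by simp
  then show ?thesis using xpos[OF i] xpos[OF j] by (simp add: field_simps)
qed

lemma p_bounds:
  assumes b: "\<forall>i<n. a * x i \<le> v i \<and> v i \<le> b * x i" and i: "i<n"
  shows "a \<le> x i * Av v i" "x i * Av v i \<le> b"
proof -
  have "Av (\<lambda>k. a * x k + 0 * x k) i \<le> Av v i" using b i by (intro Av_mono) auto
  then have "a * Av x i \<le> Av v i" using Av_lin[of a x 0 x i] by simp
  then have "a / x i \<le> Av v i" using Av_x i by simp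
  then show "a \<le> x i * Av v i" using xpos[OF i] by (simp add: field_simps)
  have "Av v i \<le> Av (\<lambda>k. b * x k + 0 * x k) i" using b i by (intro Av_mono) auto
  then have "Av v i \<le> b * Av x i" using Av_lin[of b x 0 x i] by simp
  then have "Av v i \<le> b / x i" using Av_x i by simp
  then show "x i * Av v i \<le> b" using xpos[OF i] by (simp add: field_simps)
qed

lemma half_key:
  assumes u: "\<forall>k<n. u k \<ge> 0" and i: "i<n" and j: "j<n"
  shows "th^2 * (x j * Av u j) \<le> x i * Av u i"
proof -
  have "th * Av u j \<le> Av u i" by (rule Av_ratio[OF u i j])
  moreover have "th * x j \<le> x i" by (rule x_ratio[OF i j])
  moreover have "0 \<le> Av u j" unfolding Av_def
  proof (intro sum_nonneg)
    fix k assume "k \<in> {..<n}"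
    then have "0 < A j k" "0 \<le> u k" using u Apos j by auto
    then show "0 \<le> A j k * u k" by simp
  qed
  moreover have "0 \<le> th * x j" using th_pos xpos[OF j] by simp
  ultimately have "(th * x j) * (th * Av u j) \<le> x i * Av u i"
    by (intro mult_mono) (auto simp: mult_nonneg_nonneg th_pos less_imp_le)
  then show ?thesis by (simp add: power2_eq_square mult_ac)
qed

lemma key:
  assumes b: "\<forall>i<n. a * x i \<le> v i \<and> v i \<le> b * x i" and i: "i<n" and j: "j<n"
  shows "(1 + th^2) * (x i * Av v i - x j * Av v j) \<le> (1 - th^2) * (b - a)"
proof -
  define p where "p k = x k * Av v k" for k
  have e1: "x k * Av (\<lambda>k. 1 * v k + (- a) * x k) k = p k - a" if "k<n" for k
    unfolding Av_lin p_def using Av_x[OF that] xpos[OF that] by (simp add: field_simps)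
  have e2: "x k * Av (\<lambda>k. b * x k + (- 1) * v k) k = b - p k" if "k<n" for k
    unfolding Av_lin p_def using Av_x[OF that] xpos[OF that] by (simp add: field_simps)
  have h1: "th^2 * (p i - a) \<le> p j - a"
    using half_key[of "\<lambda>k. 1 * v k + (- a) * x k" j i] b i j e1 by auto
  have h2: "th^2 * (b - p j) \<le> b - p i"
    using half_key[of "\<lambda>k. b * x k + (- 1) * v k" i j] b i j e2 by auto
  have "(1 + th^2) * (p i - p j) \<le> (1 - th^2) * (b - a)"
    using h1 h2 by (simp add: algebra_simps)
  then show ?thesis by (simp add: p_def)
qed

lemma T_bounds:
  assumes b: "\<forall>i<n. a * x i \<le> v i \<and> v i \<le> b * x i" and a: "0 < a" and i: "i<n"
  shows "x i / b \<le> T v i" "T v i \<le> x i / a"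
proof -
  have l: "a \<le> x i * Av v i" and u: "x i * Av v i \<le> b" using p_bounds[OF b i] by auto
  have xi: "x i > 0" using xpos i by simp
  define q where "q = x i * Av v i"
  have Tq: "T v i = x i / q" unfolding T_def q_def using xi by simp
  have q0: "0 < q" using l a q_def by simp
  show "x i / b \<le> T v i" unfolding Tq
    by (rule divide_left_mono) (use u q0 xi q_def in auto)
  show "T v i \<le> x i / a" unfolding Tq
    by (rule divide_left_mono) (use l a q0 xi q_def in auto)
qed

lemma step:
  assumes b: "\<forall>i<n. a * x i \<le> v i \<and> v i \<le> b * x i" and a: "0 < a"
  shows "\<exists>a' b'. 0 < a' \<and> (\<forall>i<n. a' * x i \<le> T v i \<and> T v i \<le> b' * x i) \<and>
           b' / a' - 1 \<le> kap * (b / a - 1)"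
proof -
  define p where "p k = x k * Av v k" for k
  define P where "P = Max (p ` {..<n})"
  define m where "m = Min (p ` {..<n})"
  have ne: "p ` {..<n} \<noteq> {}" using n_pos by auto
  obtain iP where iP: "iP < n" "P = p iP" using Max_in[OF _ ne] unfolding P_def by auto
  obtain im where im: "im < n" "m = p im" using Min_in[OF _ ne] unfolding m_def by auto
  have pP: "p i \<le> P" if "i<n" for i unfolding P_def using that by auto
  have pm: "m \<le> p i" if "i<n" for i unfolding m_def using that by auto
  have pb: "a \<le> p i" "p i \<le> b" if "i<n" for i using p_bounds[OF b that] p_def by auto
  have ma: "a \<le> m" using pb im by auto
  have ab: "a \<le> b" using pb[OF n_pos] by auto
  have mpos: "0 < m" using ma a by simp
  have Ppos: "0 < P" using pP[OF im(1)] mpos im by simp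
  have Tv: "T v i = x i / p i" if "i<n" for i
    unfolding T_def p_def using xpos[OF that] by simp
  have kk: "(1 + th^2) * (P - m) \<le> (1 - th^2) * (b - a)"
    using key[OF b iP(1) im(1)] iP im by (simp add: p_def)
  have t2: "0 < 1 + th^2" by (simp add: add_pos_nonneg)
  have "P - m \<le> (1 - th^2) * (b - a) / (1 + th^2)"
    using kk t2 by (simp add: pos_le_divide_eq mult.commute)
  then have Pm: "P - m \<le> kap * (b - a)" unfolding kap_def by simp
  have "P / m - 1 = (P - m) / m" using mpos by (simp add: field_simps)
  also have "\<dots> \<le> kap * (b - a) / m" using Pm mpos by (simp add: divide_right_mono)
  also have "\<dots> \<le> kap * (b - a) / a"
    using kap_nonneg ab a ma by (intro divide_left_mono mult_nonneg_nonneg) auto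
  also have "\<dots> = kap * (b / a - 1)" using a by (simp add: field_simps)
  finally have r: "P / m - 1 \<le> kap * (b / a - 1)" .
  show ?thesis
  proof (intro exI conjI allI impI)
    show "0 < 1 / P" using Ppos by simp
    show "(1 / m) / (1 / P) - 1 \<le> kap * (b / a - 1)" using r mpos Ppos by simp
  next
    fix i assume i: "i<n"
    have xi: "0 < x i" using xpos i by simp
    have pi: "0 < p i" using pm[OF i] mpos by simp
    show "1 / P * x i \<le> T v i" unfolding Tv[OF i]
      using pP[OF i] xi pi Ppos by (simp add: field_simps mult_left_mono)
    show "T v i \<le> 1 / m * x i" unfolding Tv[OF i]
      using pm[OF i] xi pi mpos by (simp add: field_simps mult_left_mono)
  qed
qed


definition vs where "vs l = (T ^^ l) (\<lambda>_. 1)"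

lemma vs_Suc: "vs (Suc l) = T (vs l)" unfolding vs_def by simp

lemma Av_pos: "(\<forall>k<n. v k > 0) \<Longrightarrow> i<n \<Longrightarrow> Av v i > 0"
  unfolding Av_def using n_pos Apos by (intro sum_pos) auto

lemma vs_pos: "i<n \<Longrightarrow> vs l i > 0"
proof (induction l arbitrary: i)
  case 0 then show ?case by (simp add: vs_def)
next
  case (Suc l) then show ?case unfolding vs_Suc T_def using Av_pos by simp
qed

lemma init: "\<exists>a b. 0 < a \<and> (\<forall>i<n. a * x i \<le> 1 \<and> 1 \<le> b * x i)"
proof -
  have ne: "x ` {..<n} \<noteq> {}" using n_pos by auto
  obtain i1 where i1: "i1<n" "Max (x ` {..<n}) = x i1" using Max_in[OF _ ne] by auto
  obtain i2 where i2: "i2<n" "Min (x ` {..<n}) = x i2" using Min_in[OF _ ne] by auto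
  have M: "x i \<le> x i1" "x i2 \<le> x i" if "i<n" for i using that i1 i2 by (metis Max_ge Min_le finite_imageI finite_lessThan imageI lessThan_iff)+
  show ?thesis
  proof (intro exI conjI allI impI)
    show "0 < 1 / x i1" using xpos i1 by simp
    fix i assume i: "i<n"
    show "1 / x i1 * x i \<le> 1" using M[OF i] xpos i1(1) by (simp add: field_simps)
    show "1 \<le> 1 / x i2 * x i" using M[OF i] xpos i2(1) by (simp add: field_simps)
  qed
qed

lemma iter:
  assumes a0: "0 < a0" and b0: "\<forall>i<n. a0 * x i \<le> 1 \<and> 1 \<le> b0 * x i"
  shows "\<exists>a b. 0 < a \<and> (\<forall>i<n. a * x i \<le> vs l i \<and> vs l i \<le> b * x i) \<and>
            b / a - 1 \<le> kap ^ l * (b0 / a0 - 1)"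
proof (induction l)
  case 0 then show ?case using a0 b0 by (auto simp: vs_def)
next
  case (Suc l)
  then obtain a b where ab: "0 < a" "\<forall>i<n. a * x i \<le> vs l i \<and> vs l i \<le> b * x i"
    "b / a - 1 \<le> kap ^ l * (b0 / a0 - 1)" by blast
  obtain a' b' where ab': "0 < a'" "\<forall>i<n. a' * x i \<le> T (vs l) i \<and> T (vs l) i \<le> b' * x i"
    "b' / a' - 1 \<le> kap * (b / a - 1)" using step[OF ab(2) ab(1)] by blast
  have "kap * (b / a - 1) \<le> kap * (kap ^ l * (b0 / a0 - 1))"
    using ab(3) kap_nonneg by (rule mult_left_mono)
  then show ?case using ab' unfolding vs_Suc by (intro exI[of _ a'] exI[of _ b']) auto
qed

lemma alt_vs:
  "\<forall>i<n. \<forall>j<n. alt_min n A (Suc l) i j =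
     (if even l then vs (Suc l) i * A i j * vs l j else vs l i * A i j * vs (Suc l) j)"
proof (induction l)
  case 0
  show ?case
  proof (intro allI impI)
    fix i j assume i: "i<n" and j: "j<n"
    have "alt_min n A (Suc 0) i j = A i j / Av (\<lambda>_. 1) i"
      by (simp add: row_scale_def Av_def)
    then show "alt_min n A (Suc 0) i j = (if even 0 then vs (Suc 0) i * A i j * vs 0 j
        else vs 0 i * A i j * vs (Suc 0) j)"
      by (simp add: vs_def T_def)
  qed
next
  case (Suc l)
  show ?case
  proof (intro allI impI)
    fix i j assume i: "i<n" and j: "j<n"
    show "alt_min n A (Suc (Suc l)) i j = (if even (Suc l) then vs (Suc (Suc l)) i * A i j * vs (Suc l) j
        else vs (Suc l) i * A i j * vs (Suc (Suc l)) j)"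
    proof (cases "even l")
      case True
      then have "odd (Suc l)" by simp
      have IH: "alt_min n A (Suc l) k j' = vs (Suc l) k * A k j' * vs l j'" if "k<n" "j'<n" for k j'
        using Suc.IH True that by auto
      have "(\<Sum>k<n. alt_min n A (Suc l) k j) = (\<Sum>k<n. vs l j * (A j k * vs (Suc l) k))"
        using IH j by (intro sum.cong) (auto simp: symA[of _ j] mult_ac)
      also have "\<dots> = vs l j * Av (vs (Suc l)) j" by (simp add: Av_def sum_distrib_left)
      finally have cs: "(\<Sum>k<n. alt_min n A (Suc l) k j) = vs l j * Av (vs (Suc l)) j" .
      have "alt_min n A (Suc (Suc l)) i j = alt_min n A (Suc l) i j / (\<Sum>k<n. alt_min n A (Suc l) k j)"
        using True by (simp add: col_scale_def)
      also have "\<dots> = vs (Suc l) i * A i j * vs l j / (vs l j * Av (vs (Suc l)) j)"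
        using IH i j cs by simp
      also have "\<dots> = vs (Suc l) i * A i j * vs (Suc (Suc l)) j"
        using vs_pos[OF j, of l] by (simp add: vs_Suc T_def)
      finally show ?thesis using True by simp
    next
      case False
      have IH: "alt_min n A (Suc l) i k = vs l i * A i k * vs (Suc l) k" if "k<n" for k
        using Suc.IH False that i by auto
      have "(\<Sum>k<n. alt_min n A (Suc l) i k) = (\<Sum>k<n. vs l i * (A i k * vs (Suc l) k))"
        using IH by (intro sum.cong) (auto simp: mult_ac)
      also have "\<dots> = vs l i * Av (vs (Suc l)) i" by (simp add: Av_def sum_distrib_left)
      finally have rs: "(\<Sum>k<n. alt_min n A (Suc l) i k) = vs l i * Av (vs (Suc l)) i" .
      have "alt_min n A (Suc (Suc l)) i j = alt_min n A (Suc l) i j / (\<Sum>k<n. alt_min n A (Suc l) i k)"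
        using False by (simp add: row_scale_def)
      also have "\<dots> = vs l i * A i j * vs (Suc l) j / (vs l i * Av (vs (Suc l)) i)"
        using IH j rs by simp
      also have "\<dots> = vs (Suc (Suc l)) i * A i j * vs (Suc l) j"
        using vs_pos[OF i, of l] by (simp add: vs_Suc T_def)
      finally show ?thesis using False by simp
    qed
  qed
qed

lemma prod_est:
  fixes a b xi xj u w c :: real
  assumes "0 < a" "a \<le> b" "0 < xi" "0 < xj" "0 \<le> c"
    "a * xj \<le> w" "w \<le> b * xj" "xi / b \<le> u" "u \<le> xi / a"
  shows "\<bar>u * c * w - xi * c * xj\<bar> \<le> xi * c * xj * (b / a - 1)"
proof -
  define r where "r = b / a"
  have r1: "1 \<le> r" using assms by (simp add: r_def)
  have "0 < a * xj" "0 < xi / b" using assms by auto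
  then have w0: "0 \<le> w" and u0: "0 \<le> u" using assms by linarith+
  have up: "u * w \<le> xi * xj * r"
  proof -
    have "u * w \<le> (xi / a) * (b * xj)"
      using assms w0 u0 by (intro mult_mono) auto
    then show ?thesis using assms by (simp add: r_def field_simps)
  qed
  have lo: "xi * xj / r \<le> u * w"
  proof -
    have "(xi / b) * (a * xj) \<le> u * w"
      using assms w0 u0 by (intro mult_mono) auto
    then show ?thesis using assms by (simp add: r_def field_simps)
  qed
  have "2 - r \<le> 1 / r"
  proof -
    have "0 \<le> (r - 1)^2" by simp
    then have "r * (2 - r) \<le> 1" by (simp add: power2_eq_square algebra_simps)
    then show ?thesis using r1 by (simp add: field_simps)
  qed
  then have "xi * xj * (2 - r) \<le> xi * xj * (1 / r)"
    using assms by (intro mult_left_mono) auto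
  then have "xi * xj * (2 - r) \<le> xi * xj / r" by simp
  then have "\<bar>u * w - xi * xj\<bar> \<le> xi * xj * (r - 1)" using up lo by (simp add: abs_le_iff algebra_simps)
  then have "c * \<bar>u * w - xi * xj\<bar> \<le> c * (xi * xj * (r - 1))" using assms by (intro mult_left_mono) auto
  moreover have "u * c * w - xi * c * xj = c * (u * w - xi * xj)" by (simp add: algebra_simps)
  then have "\<bar>u * c * w - xi * c * xj\<bar> = c * \<bar>u * w - xi * xj\<bar>"
    using assms by (simp add: abs_mult)
  ultimately show ?thesis by (simp add: r_def mult_ac)
qed

lemma alt_conv:
  assumes i: "i<n" and j: "j<n"
  shows "(\<lambda>l. alt_min n A l i j) \<longlonglongrightarrow> x i * A i j * x j"
proof -
  obtain a0 b0 where ab0: "0 < a0" "\<forall>i<n. a0 * x i \<le> 1 \<and> 1 \<le> b0 * x i" using init by blast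
  define s where "s = x i * A i j * x j"
  have s0: "0 \<le> s" using xpos Apos i j by (simp add: s_def less_imp_le)
  have est: "norm (alt_min n A (Suc l) i j - s) \<le> s * (b0 / a0 - 1) * kap ^ l" for l
  proof -
    obtain a b where ab: "0 < a" "\<forall>i<n. a * x i \<le> vs l i \<and> vs l i \<le> b * x i"
      "b / a - 1 \<le> kap ^ l * (b0 / a0 - 1)" using iter[OF ab0] by blast
    have "a * x 0 \<le> b * x 0" using ab(2) n_pos by force
    then have ableb: "a \<le> b" using xpos[OF n_pos] by (simp add: mult_le_cancel_right_pos)
    have Tb: "x k / b \<le> vs (Suc l) k" "vs (Suc l) k \<le> x k / a" if "k<n" for k
      using T_bounds[OF ab(2) ab(1) that] by (auto simp: vs_Suc)
    have "\<bar>alt_min n A (Suc l) i j - s\<bar> \<le> s * (b / a - 1)"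
    proof (cases "even l")
      case True
      have e: "alt_min n A (Suc l) i j = vs (Suc l) i * A i j * vs l j" using alt_vs[of l] i j True by auto
      have "\<bar>vs (Suc l) i * A i j * vs l j - s\<bar> \<le> s * (b / a - 1)" unfolding s_def
        by (rule prod_est[OF ab(1) ableb xpos[OF i] xpos[OF j]])
          (use ab(2) Tb[OF i] Apos[OF i j] j in auto)
      then show ?thesis using e by simp
    next
      case False
      have e: "alt_min n A (Suc l) i j = vs l i * A i j * vs (Suc l) j" using alt_vs[of l] i j False by auto
      have "\<bar>vs (Suc l) j * A i j * vs l i - x j * A i j * x i\<bar> \<le> x j * A i j * x i * (b / a - 1)"
        by (rule prod_est[OF ab(1) ableb xpos[OF j] xpos[OF i]])
          (use ab(2) Tb[OF j] Apos[OF i j] i in auto)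
      then show ?thesis using e unfolding s_def by (simp add: mult_ac)
    qed
    also have "\<dots> \<le> s * (kap ^ l * (b0 / a0 - 1))" using ab(3) s0 by (rule mult_left_mono)
    finally show ?thesis by (simp add: mult_ac)
  qed
  have "(\<lambda>l. kap ^ l) \<longlonglongrightarrow> 0"
    using kap_nonneg kap_less by (intro LIMSEQ_power_zero) auto
  then have lim: "(\<lambda>l. s * (b0 / a0 - 1) * kap ^ l) \<longlonglongrightarrow> 0"
    by (rule tendsto_mult_right_zero)
  have "\<forall>l. norm (alt_min n A (Suc l) i j - s) \<le> s * (b0 / a0 - 1) * kap ^ l" using est by blast
  then have "(\<lambda>l. alt_min n A (Suc l) i j - s) \<longlonglongrightarrow> 0"
    using lim by (rule Lim_null_comparison[OF always_eventually])
  then have "(\<lambda>l. alt_min n A (Suc l) i j) \<longlonglongrightarrow> s" by (rule LIM_zero_cancel)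
  then show ?thesis unfolding s_def by (rule LIMSEQ_imp_Suc)
qed


lemma Av_cong: "(\<forall>k<n. u k = w k) \<Longrightarrow> Av u i = Av w i"
  unfolding Av_def by (intro sum.cong) auto

lemma uniq:
  assumes pq: "\<forall>i<n. p i > 0 \<and> q i > 0"
    and rows: "\<forall>i<n. (\<Sum>j<n. p i * A i j * q j) = 1"
    and cols: "\<forall>j<n. (\<Sum>i<n. p i * A i j * q j) = 1"
    and i: "i<n" and j: "j<n"
  shows "p i * A i j * q j = x i * A i j * x j"
proof -
  have hp: "p k = T q k" if k: "k<n" for k
  proof -
    have "(\<Sum>j<n. p k * A k j * q j) = p k * Av q k" by (simp add: Av_def sum_distrib_left mult_ac)
    then have e: "p k * Av q k = 1" using rows k by simp
    then have "Av q k \<noteq> 0" by auto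
    then show ?thesis unfolding T_def using e by (simp add: field_simps)
  qed
  have hq: "q k = T p k" if k: "k<n" for k
  proof -
    have "(\<Sum>i<n. p i * A i k * q k) = q k * Av p k"
      by (simp add: Av_def sum_distrib_left mult_ac symA[of _ k])
    then have e: "q k * Av p k = 1" using cols k by simp
    then have "Av p k \<noteq> 0" by auto
    then show ?thesis unfolding T_def using e by (simp add: field_simps)
  qed
  have TT: "T (T q) k = q k" if "k<n" for k
  proof -
    have "Av (T q) k = Av p k" using hp by (intro Av_cong) auto
    then show ?thesis using hq[OF that] by (simp add: T_def)
  qed
  define r where "r k = q k / x k" for k
  define a where "a = Min (r ` {..<n})"
  define b where "b = Max (r ` {..<n})"
  have ne: "r ` {..<n} \<noteq> {}" using n_pos by auto
  obtain ia where ia: "ia < n" "a = r ia" using Min_in[OF _ ne] unfolding a_def by auto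
  obtain ib where ib: "ib < n" "b = r ib" using Max_in[OF _ ne] unfolding b_def by auto
  have ra: "a \<le> r k" and rb: "r k \<le> b" if "k<n" for k
    unfolding a_def b_def using that by auto
  have a0: "0 < a" using ia pq xpos unfolding r_def by simp
  have bnd: "\<forall>k<n. a * x k \<le> q k \<and> q k \<le> b * x k"
  proof (intro allI impI)
    fix k assume k: "k<n"
    show "a * x k \<le> q k \<and> q k \<le> b * x k"
      using ra[OF k] rb[OF k] xpos[OF k] unfolding r_def by (simp add: field_simps)
  qed
  obtain a' b' where ab': "0 < a'" "\<forall>i<n. a' * x i \<le> T q i \<and> T q i \<le> b' * x i"
    "b' / a' - 1 \<le> kap * (b / a - 1)" using step[OF bnd a0] by blast
  obtain a'' b'' where ab'': "0 < a''" "\<forall>i<n. a'' * x i \<le> T (T q) i \<and> T (T q) i \<le> b'' * x i"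
    "b'' / a'' - 1 \<le> kap * (b' / a' - 1)" using step[OF ab'(2) ab'(1)] by blast
  have "a'' * x ia \<le> a * x ia" using ab''(2) TT[OF ia(1)] ia xpos[OF ia(1)] unfolding r_def
    by force
  then have a''a: "a'' \<le> a" using xpos[OF ia(1)] by (simp add: mult_le_cancel_right_pos)
  have "b * x ib \<le> b'' * x ib" using ab''(2) TT[OF ib(1)] ib xpos[OF ib(1)] unfolding r_def
    by force
  then have bb'': "b \<le> b''" using xpos[OF ib(1)] by (simp add: mult_le_cancel_right_pos)
  have ab: "a \<le> b" using ra[OF ia(1)] rb[OF ia(1)] by simp
  have "b / a \<le> b'' / a" using bb'' a0 by (simp add: divide_right_mono)
  also have "\<dots> \<le> b'' / a''" using a''a ab''(1) bb'' ab a0 by (intro divide_left_mono) auto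
  finally have "b / a - 1 \<le> b'' / a'' - 1" by simp
  also have "\<dots> \<le> kap * (b' / a' - 1)" by (rule ab''(3))
  also have "\<dots> \<le> kap * (kap * (b / a - 1))" using ab'(3) kap_nonneg by (rule mult_left_mono)
  finally have d1: "b / a - 1 \<le> (kap * kap) * (b / a - 1)" by (simp add: mult.assoc)
  have "kap * kap \<le> kap * 1" using kap_nonneg kap_less by (intro mult_left_mono) auto
  then have kk: "kap * kap < 1" using kap_less by simp
  have "b / a - 1 \<le> 0"
  proof (rule ccontr)
    assume "\<not> b / a - 1 \<le> 0"
    then have "0 < b / a - 1" by simp
    then have "(kap * kap) * (b / a - 1) < 1 * (b / a - 1)" using kk by (intro mult_strict_right_mono) auto
    then show False using d1 by simp
  qed
  then have "b = a" using ab a0 by (simp add: field_simps)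
  then have qa: "q k = a * x k" if "k<n" for k using bnd that by (simp add: order_antisym)
  have "Av q i = a * Av x i" using Av_cong[of q "\<lambda>k. a * x k + 0 * x k" i] qa Av_lin[of a x 0 x i] by simp
  then have "p i = x i / a" using hp[OF i] Av_x[OF i] by (simp add: T_def)
  then show ?thesis using qa[OF j] a0 by simp
qed

lemma sinkhorn_eq:
  "sinkhorn n A = (\<lambda>i j. if i < n \<and> j < n then x i * A i j * x j else 0)"
  unfolding sinkhorn_def
proof (rule the_equality)
  let ?S = "\<lambda>i j. if i < n \<and> j < n then x i * A i j * x j else 0"
  have rs: "(\<Sum>j<n. ?S i j) = 1" if "i<n" for i
  proof -
    have "(\<Sum>j<n. ?S i j) = (\<Sum>j<n. x i * (A i j * x j))"
      using that by (intro sum.cong) auto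
    also have "\<dots> = x i * Av x i" unfolding Av_def by (rule sum_distrib_left[symmetric])
    finally have "(\<Sum>j<n. ?S i j) = x i * Av x i" .
    then show ?thesis using xfix[OF that] by (simp add: Av_def)
  qed
  have cs: "(\<Sum>i<n. ?S i j) = 1" if "j<n" for j
  proof -
    have "(\<Sum>i<n. ?S i j) = (\<Sum>i<n. x j * (A j i * x i))"
      using that by (intro sum.cong) (auto simp: symA[of i j for i])
    also have "\<dots> = x j * Av x j" unfolding Av_def by (rule sum_distrib_left[symmetric])
    finally have "(\<Sum>i<n. ?S i j) = x j * Av x j" .
    then show ?thesis using xfix[OF that] by (simp add: Av_def)
  qed
  have nn: "\<forall>i<n. \<forall>j<n. 0 \<le> ?S i j"
  proof (intro allI impI)
    fix i j assume that: "i<n" "j<n"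
    show "0 \<le> ?S i j" using xpos[OF that(1)] xpos[OF that(2)] Apos[OF that] by simp
  qed
  have ds: "doubly_stochastic n ?S" unfolding doubly_stochastic_def
    using rs cs nn by simp
  have z: "\<forall>i j. n \<le> i \<or> n \<le> j \<longrightarrow> ?S i j = 0" by auto
  have ex: "\<exists>xa y. (\<forall>i<n. 0 < xa i \<and> 0 < y i) \<and> (\<forall>i<n. \<forall>j<n. ?S i j = xa i * A i j * y j)"
    by (rule exI[of _ x], rule exI[of _ x]) (simp add: xpos)
  show "doubly_stochastic n ?S \<and> (\<forall>i j. n \<le> i \<or> n \<le> j \<longrightarrow> ?S i j = 0) \<and>
    (\<exists>xa y. (\<forall>i<n. 0 < xa i \<and> 0 < y i) \<and> (\<forall>i<n. \<forall>j<n. ?S i j = xa i * A i j * y j))"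
    using ds z ex by (intro conjI)
next
  let ?S = "\<lambda>i j. if i < n \<and> j < n then x i * A i j * x j else 0"
  fix M assume M: "doubly_stochastic n M \<and> (\<forall>i j. n \<le> i \<or> n \<le> j \<longrightarrow> M i j = 0) \<and>
    (\<exists>xa y. (\<forall>i<n. 0 < xa i \<and> 0 < y i) \<and> (\<forall>i<n. \<forall>j<n. M i j = xa i * A i j * y j))"
  have ds: "doubly_stochastic n M" using conjunct1[OF M] .
  have z: "\<forall>i j. n \<le> i \<or> n \<le> j \<longrightarrow> M i j = 0" using conjunct1[OF conjunct2[OF M]] .
  obtain p q where pq: "\<forall>i<n. 0 < p i \<and> 0 < q i" "\<forall>i<n. \<forall>j<n. M i j = p i * A i j * q j"
    using conjunct2[OF conjunct2[OF M]] by blast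
  have rows: "\<forall>i<n. (\<Sum>j<n. p i * A i j * q j) = 1"
  proof (intro allI impI)
    fix i assume i: "i<n"
    have "(\<Sum>j<n. p i * A i j * q j) = (\<Sum>j<n. M i j)" using pq(2) i by (intro sum.cong) auto
    then show "(\<Sum>j<n. p i * A i j * q j) = 1" using ds i unfolding doubly_stochastic_def by simp
  qed
  have cols: "\<forall>j<n. (\<Sum>i<n. p i * A i j * q j) = 1"
  proof (intro allI impI)
    fix j assume j: "j<n"
    have "(\<Sum>i<n. p i * A i j * q j) = (\<Sum>i<n. M i j)" using pq(2) j by (intro sum.cong) auto
    then show "(\<Sum>i<n. p i * A i j * q j) = 1" using ds j unfolding doubly_stochastic_def by simp
  qed
  show "M = ?S"
  proof (intro ext)
    fix i j
    show "M i j = ?S i j"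
    proof (cases "i < n \<and> j < n")
      case True
      then have "M i j = p i * A i j * q j" using pq(2) by simp
      also have "\<dots> = x i * A i j * x j" using uniq[OF pq(1) rows cols] True by simp
      finally show ?thesis using True by simp
    next
      case False
      then have "n \<le> i \<or> n \<le> j" by auto
      then have "M i j = 0" using z by blast
      then show ?thesis using False by auto
    qed
  qed
qed

end


lemma la: "((\<lambda>L::real. (L powr (2/3) - L powr (1/3)) / (L - 1)) \<longlongrightarrow> 0) at_top" by real_asymp
lemma lb: "((\<lambda>L::real. (L - L powr (2/3)) / (L - 1)) \<longlongrightarrow> 1) at_top" by real_asymp
lemma lc: "((\<lambda>L::real. (L powr (1/3) - 1) / (L - 1)) \<longlongrightarrow> 0) at_top" by real_asymp

lemma A6_sym: "A6 K i j = A6 K j i"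
  unfolding A6_def by (auto simp: less_Suc_eq numeral_3_eq_3)

lemma conc_sk:
  fixes t :: real
  assumes t: "0 < t"
  defines "y \<equiv> 1 / sqrt (1 + t + t^2)"
  shows "sk 3 (A6 (t^3)) (\<lambda>i. [y/t, y, t*y] ! i) (min (t^3) 1 / max (t^3) 1)"
proof -
  have s: "0 < 1 + t + t^2" using t by (simp add: add_pos_nonneg)
  have y0: "0 < y" unfolding y_def using s by simp
  have "y^2 = 1 / (1 + t + t^2)" unfolding y_def using s
    by (simp add: power_divide)
  then have yy: "y * y = 1 / (1 + t + t^2)" by (simp add: power2_eq_square)
  have K0: "0 < t^3" using t by simp
  have rng: "min (t^3) 1 \<le> A6 (t^3) i j \<and> A6 (t^3) i j \<le> max (t^3) 1" if "i<3" "j<3" for i j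
    using that unfolding A6_def by (auto simp: less_Suc_eq numeral_3_eq_3)
  show ?thesis
  proof (unfold_locales)
    show "0 < (3::nat)" by simp
    show "\<And>i j. A6 (t^3) i j = A6 (t^3) j i" by (rule A6_sym)
    show "\<And>i j. i < 3 \<Longrightarrow> j < 3 \<Longrightarrow> 0 < A6 (t ^ 3) i j"
      using rng K0 by (metis less_le_trans min_less_iff_conj zero_less_one)
    show "0 < min (t^3) 1 / max (t^3) 1" using K0 by simp
    show "min (t^3) 1 / max (t^3) 1 \<le> 1" using K0 by simp
    show "min (t^3) 1 / max (t^3) 1 * A6 (t^3) j k \<le> A6 (t^3) i k"
      if "i < 3" "j < 3" "k < 3" for i j k
    proof -
      have "min (t^3) 1 / max (t^3) 1 * A6 (t^3) j k \<le> min (t^3) 1 / max (t^3) 1 * max (t^3) 1"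
        using rng[of j k] that K0 by (intro mult_left_mono) auto
      also have "\<dots> = min (t^3) 1" using K0 by simp
      also have "\<dots> \<le> A6 (t^3) i k" using rng[of i k] that by simp
      finally show ?thesis .
    qed
    show "\<And>i. i < 3 \<Longrightarrow> 0 < [y / t, y, t * y] ! i"
      using y0 t by (auto simp: less_Suc_eq numeral_3_eq_3)
    show "[y / t, y, t * y] ! i * (\<Sum>k<3. A6 (t ^ 3) i k * [y / t, y, t * y] ! k) = 1"
      if "i < 3" for i
    proof -
      have e: "(\<Sum>k<3. f k) = f 0 + f 1 + f 2" for f :: "nat \<Rightarrow> real"
        by (simp add: numeral_3_eq_3 numeral_2_eq_2)
      have "i = 0 \<or> i = 1 \<or> i = 2" using that by auto
      then have "[y / t, y, t * y] ! i * (\<Sum>k<3. A6 (t ^ 3) i k * [y / t, y, t * y] ! k)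
         = (y * y) * (1 + t + t^2)"
        unfolding e using t by (auto simp: A6_def field_simps power2_eq_square power3_eq_cube)
      then show ?thesis using yy s by simp
    qed
  qed
qed


lemma alt_rat:
  assumes K: "K \<in> \<rat>"
  shows "alt_min 3 (A6 K) l i j \<in> \<rat>"
proof (induction l arbitrary: i j)
  case 0
  show ?case using K unfolding A6_def by (auto simp: less_Suc_eq numeral_3_eq_3)
next
  case (Suc l)
  then show ?case by (auto simp: row_scale_def col_scale_def intro!: Rats_divide Rats_sum)
qed

lemma core:
  fixes K :: real
  assumes "K > 0" and "K \<noteq> 1"
  defines "y \<equiv> 1 / sqrt (1 + K powr (1/3) + K powr (2/3))"
  defines "x \<equiv> y / K powr (1/3)"
  defines "z \<equiv> K powr (1/3) * y"
  defines "a \<equiv> (K powr (2/3) - K powr (1/3)) / (K - 1)"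
  defines "b \<equiv> (K - K powr (2/3)) / (K - 1)"
  defines "c \<equiv> (K powr (1/3) - 1) / (K - 1)"
  shows
    "(\<forall>i<3. \<forall>j<3. sinkhorn 3 (A6 K) i j = [x, y, z] ! i * A6 K i j * [x, y, z] ! j)
     \<and> (\<forall>i<3. \<forall>j<3. sinkhorn 3 (A6 K) i j = [[a, b, c], [b, c, a], [c, a, b]] ! i ! j)
     \<and> ((\<lambda>l. (K - 1) * alt_min 3 (A6 K) l 0 2 + 1) \<longlonglongrightarrow> K powr (1/3))
     \<and> ((\<lambda>l. (K - 1) * alt_min 3 (A6 K) l 1 1 + 1) \<longlonglongrightarrow> K powr (1/3))
     \<and> ((\<lambda>l. (K - 1) * alt_min 3 (A6 K) l 2 0 + 1) \<longlonglongrightarrow> K powr (1/3))"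
proof -
  define t where "t = K powr (1/3)"
  have t0: "0 < t" using assms(1) by (simp add: t_def)
  have K3: "t^3 = K" unfolding t_def using assms(1) by (simp add: powr_power)
  have K23: "K powr (2/3) = t^2" unfolding t_def using assms(1) by (simp add: powr_power)
  have K1: "t^3 - 1 \<noteq> 0" using K3 assms(2) by simp
  have s: "0 < 1 + t + t^2" using t0 by (simp add: add_pos_nonneg)
  have yt: "y = 1 / sqrt (1 + t + t^2)" unfolding y_def t_def[symmetric] K23 ..
  have "y^2 = 1 / (1 + t + t^2)" unfolding yt using s by (simp add: power_divide)
  then have yy: "y * y = 1 / (1 + t + t^2)" by (simp add: power2_eq_square)
  have fac: "t^3 - 1 = (t - 1) * (1 + t + t^2)" by (simp add: algebra_simps power2_eq_square power3_eq_cube)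
  have t1: "t - 1 \<noteq> 0" using K1 fac by auto
  have K1b: "t * (t * t) - 1 \<noteq> 0" "t * (t * t) \<noteq> 1" using K1 by (simp_all add: power3_eq_cube)
  have at: "a = t * (y * y)" unfolding a_def unfolding t_def[symmetric] K23 unfolding yy K3[symmetric] fac
    using t1 s K1b by (simp add: field_simps power2_eq_square)
  have bt: "b = t^2 * (y * y)" unfolding b_def unfolding t_def[symmetric] K23 unfolding yy K3[symmetric] fac
    using t1 s K1b by (simp add: field_simps power2_eq_square power3_eq_cube)
  have ct: "c = y * y" unfolding c_def unfolding t_def[symmetric] K23 unfolding yy K3[symmetric] fac
    using t1 s K1b by (simp add: field_simps power2_eq_square)
  have xt: "x = y / t" unfolding x_def t_def ..
  have zt: "z = t * y" unfolding z_def t_def ..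
  interpret sk 3 "A6 K" "\<lambda>i. [y/t, y, t*y] ! i" "min K 1 / max K 1"
    using conc_sk[OF t0] unfolding K3 yt[symmetric] .
  have S: "sinkhorn 3 (A6 K) i j = [y/t, y, t*y] ! i * A6 K i j * [y/t, y, t*y] ! j"
    if "i<3" "j<3" for i j using that by (simp add: sinkhorn_eq)
  have c1: "\<forall>i<3. \<forall>j<3. sinkhorn 3 (A6 K) i j = [x, y, z] ! i * A6 K i j * [x, y, z] ! j"
    using S xt zt by simp
  have c2: "\<forall>i<3. \<forall>j<3. sinkhorn 3 (A6 K) i j = [[a, b, c], [b, c, a], [c, a, b]] ! i ! j"
  proof (intro allI impI)
    fix i j :: nat assume i: "i<3" and j: "j<3"
    have "i = 0 \<or> i = 1 \<or> i = 2" "j = 0 \<or> j = 1 \<or> j = 2" using i j by auto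
    then show "sinkhorn 3 (A6 K) i j = [[a, b, c], [b, c, a], [c, a, b]] ! i ! j"
      unfolding S[OF i j] at bt ct unfolding K3[symmetric] using t0
      by (auto simp: A6_def field_simps power2_eq_square power3_eq_cube)
  qed
  have lim: "(\<lambda>l. (K - 1) * alt_min 3 (A6 K) l i j + 1) \<longlonglongrightarrow> K powr (1/3)"
    if "i<3" "j<3" "[y/t, y, t*y] ! i * A6 K i j * [y/t, y, t*y] ! j = y * y" for i j
  proof -
    have "(\<lambda>l. (K - 1) * alt_min 3 (A6 K) l i j + 1) \<longlonglongrightarrow> (K - 1) * (y * y) + 1"
      using alt_conv[OF that(1,2)] that(3) by (intro tendsto_intros) auto
    moreover have "(K - 1) * (y * y) + 1 = K powr (1/3)"
      unfolding t_def[symmetric] unfolding yy K3[symmetric] fac using s by (simp add: field_simps)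
    ultimately show ?thesis by simp
  qed
  have l1: "(\<lambda>l. (K - 1) * alt_min 3 (A6 K) l 0 2 + 1) \<longlonglongrightarrow> K powr (1/3)"
    using t0 by (intro lim) (auto simp: A6_def)
  have l2: "(\<lambda>l. (K - 1) * alt_min 3 (A6 K) l 1 1 + 1) \<longlonglongrightarrow> K powr (1/3)"
    using t0 by (intro lim) (auto simp: A6_def)
  have l3: "(\<lambda>l. (K - 1) * alt_min 3 (A6 K) l 2 0 + 1) \<longlonglongrightarrow> K powr (1/3)"
    using t0 by (intro lim) (auto simp: A6_def)
  show ?thesis using c1 c2 l1 l2 l3 by blast
qed

lemma lim_top:
  "\<forall>i<3. \<forall>j<3. ((\<lambda>L. sinkhorn 3 (A6 L) i j) \<longlongrightarrow>
            [[0, 1, 0], [1, 0, 0], [0, 0, 1::real]] ! i ! j) at_top"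
proof (intro allI impI)
  fix i j :: nat assume i: "i<3" and j: "j<3"
  define aa where "aa L = (L powr (2/3) - L powr (1/3)) / (L - 1)" for L :: real
  define bb where "bb L = (L - L powr (2/3)) / (L - 1)" for L :: real
  define cc where "cc L = (L powr (1/3) - 1) / (L - 1)" for L :: real
  have ev: "eventually (\<lambda>L. sinkhorn 3 (A6 L) i j =
      [[aa L, bb L, cc L], [bb L, cc L, aa L], [cc L, aa L, bb L]] ! i ! j) at_top"
    using eventually_gt_at_top[of "1::real"]
  proof (rule eventually_mono)
    fix L :: real assume "1 < L"
    then show "sinkhorn 3 (A6 L) i j = [[aa L, bb L, cc L], [bb L, cc L, aa L], [cc L, aa L, bb L]] ! i ! j"
      using core[of L] i j unfolding aa_def bb_def cc_def by auto
  qed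
  have A: "(aa \<longlongrightarrow> 0) at_top" unfolding aa_def by (rule la)
  have B: "(bb \<longlongrightarrow> 1) at_top" unfolding bb_def by (rule lb)
  have C: "(cc \<longlongrightarrow> 0) at_top" unfolding cc_def by (rule lc)
  have "i = 0 \<or> i = 1 \<or> i = 2" "j = 0 \<or> j = 1 \<or> j = 2" using i j by auto
  then have "((\<lambda>L. [[aa L, bb L, cc L], [bb L, cc L, aa L], [cc L, aa L, bb L]] ! i ! j) \<longlongrightarrow>
            [[0, 1, 0], [1, 0, 0], [0, 0, 1::real]] ! i ! j) at_top"
    using A B C by auto
  then show "((\<lambda>L. sinkhorn 3 (A6 L) i j) \<longlongrightarrow> [[0, 1, 0], [1, 0, 0], [0, 0, 1::real]] ! i ! j) at_top"
    using tendsto_cong[OF ev] by blast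
qed

theorem mainTheorem11:
  fixes K :: real
  assumes "K > 0" and "K \<noteq> 1"
  defines "y \<equiv> 1 / sqrt (1 + K powr (1/3) + K powr (2/3))"
  defines "x \<equiv> y / K powr (1/3)"
  defines "z \<equiv> K powr (1/3) * y"
  defines "a \<equiv> (K powr (2/3) - K powr (1/3)) / (K - 1)"
  defines "b \<equiv> (K - K powr (2/3)) / (K - 1)"
  defines "c \<equiv> (K powr (1/3) - 1) / (K - 1)"
  shows
    "(\<forall>i<3. \<forall>j<3. sinkhorn 3 (A6 K) i j = [x, y, z] ! i * A6 K i j * [x, y, z] ! j)
     \<and> (\<forall>i<3. \<forall>j<3. sinkhorn 3 (A6 K) i j = [[a, b, c], [b, c, a], [c, a, b]] ! i ! j)
     \<and> ((\<lambda>l. (K - 1) * alt_min 3 (A6 K) l 0 2 + 1) \<longlonglongrightarrow> K powr (1/3))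
     \<and> ((\<lambda>l. (K - 1) * alt_min 3 (A6 K) l 1 1 + 1) \<longlonglongrightarrow> K powr (1/3))
     \<and> ((\<lambda>l. (K - 1) * alt_min 3 (A6 K) l 2 0 + 1) \<longlonglongrightarrow> K powr (1/3))
     \<and> (K \<in> \<rat> \<longrightarrow> (\<forall>l. \<forall>i<3. \<forall>j<3. alt_min 3 (A6 K) l i j \<in> \<rat>))
     \<and> (\<forall>i<3. \<forall>j<3. ((\<lambda>L. sinkhorn 3 (A6 L) i j) \<longlongrightarrow>
            [[0, 1, 0], [1, 0, 0], [0, 0, 1::real]] ! i ! j) at_top)"
  using core[OF assms(1,2)] alt_rat lim_top
  unfolding y_def x_def z_def a_def b_def c_def by blast

end
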